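(* Let $m\ge 2$. The following random substitution subshifts are semi-mixing: (1) the random Fibonacci subshift $X_1 = X_{\vartheta_1}$, with respect to $\mathcal{S}_1=\{ab,ba\}$; (2) the random tribonacci subshift $X_\tau$, with respect to $\mathcal{S}_\tau=\{ab,ba,ac,ca\}$; (3) the degree-$m$ random metallic mean subshift $X_m = X_{\vartheta_m}$, with respect to $\mathcal{S}_m=\{a^iba^{m-i}\mid 0\le i\le m\}$.
   Context: Words: for a finite alphabet $\mathcal{A}$, $\mathcal{A}^+$ is the set of non-empty finite words; $u^i$ is the $i$-fold concatenation ($u^0$ the empty word); $v\prec w$ means $v$ is a (contiguous) subword of $w$. For sets of words $A,B$, $AB=\{uv\mid u\in A, v\in B\}$. A random substitution is a map $\vartheta$ assigning to each letter $a\in\mathcal{A}$ a non-empty finite set $\vartheta(a)\subseteq\mathcal{A}^+$; it is extended to words by $\vartheta(w_1\cdots w_k)=\vartheta(w_1)\cdots\vartheta(w_k)$ (set concatenation) and to sets by $\vartheta(A)=\bigcup_{w\in A}\vartheta(w)$; $\vartheta^k$ denotes the $k$-fold iterate. A word $u$ is $\vartheta$-legal if there are $k\ge 0$, a letter $a$ and $w\in\vartheta^k(a)$ with $u\prec w$. The RS-subshift is $X_\vartheta=\{x\in\mathcal{A}^{\mathbb{Z}}\mid \text{every finite subword of } x \text{ is } \vartheta\text{-legal}\}$ with the left shift $\sigma$. Its language $\mathcal{L}$ is the set of all finite subwords of elements of $X_\vartheta$, and $\mathcal{L}^\ell$ the set of those of length $\ell$. Semi-mixing (symbolic form, equivalent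 to the dynamical definition: there is a proper clopen $U$ such that for every nonempty open $V$ there is $N$ with $\sigma^n(V)\cap U\neq\varnothing$ for all $n\ge N$): a subshift is semi-mixing with respect to a set $\mathcal{S}\subsetneq\mathcal{L}^\ell$ (for some length $\ell$) if for every $w\in\mathcal{L}$ there is $N\in\mathbb{N}$ such that for every $n\ge N$ there exist a word $u$ of length $n$ and $s\in\mathcal{S}$ with $wus\in\mathcal{L}$. Random Fibonacci substitution on $\{a,b\}$: $\vartheta_1\colon a\mapsto\{ab,ba\},\ b\mapsto\{a\}$. Random tribonacci substitution on $\{a,b,c\}$: $\tau\colon a\mapsto\{ab,ba\},\ b\mapsto\{ac,ca\},\ c\mapsto\{a\}$. Degree-$m$ random metallic mean substitution on $\{a,b\}$: $\vartheta_m\colon a\mapsto\{a^iba^{m-i}\mid 0\le i\le m\},\ b\mapsto\{a\}$. *)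

theory Defs
  imports Main "HOL-Library.Sublist"
begin

text \<open>Random substitutions: each letter is mapped to a nonempty finite set of
nonempty words (words are lists).\<close>

fun subst_word :: "('a \<Rightarrow> 'a list set) \<Rightarrow> 'a list \<Rightarrow> 'a list set" where
  "subst_word \<theta> [] = {[]}"
| "subst_word \<theta> (x # xs) = {u @ v | u v. u \<in> \<theta> x \<and> v \<in> subst_word \<theta> xs}"

definition subst_set :: "('a \<Rightarrow> 'a list set) \<Rightarrow> 'a list set \<Rightarrow> 'a list set" where
  "subst_set \<theta> A = (\<Union>w\<in>A. subst_word \<theta> w)"

definition subst_pow :: "('a \<Rightarrow> 'a list set) \<Rightarrow> nat \<Rightarrow> 'a list set \<Rightarrow> 'a list set" where
  "subst_pow \<theta> k A = (subst_set \<theta> ^^ k) A"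

definition legal :: "('a \<Rightarrow> 'a list set) \<Rightarrow> 'a list \<Rightarrow> bool" where
  "legal \<theta> u \<longleftrightarrow> (\<exists>k a w. w \<in> subst_pow \<theta> k {[a]} \<and> sublist u w)"

definition window :: "(int \<Rightarrow> 'a) \<Rightarrow> int \<Rightarrow> nat \<Rightarrow> 'a list" where
  "window x i n = map (\<lambda>j. x (i + int j)) [0..<n]"

definition RS_subshift :: "('a \<Rightarrow> 'a list set) \<Rightarrow> (int \<Rightarrow> 'a) set" where
  "RS_subshift \<theta> = {x. \<forall>i n. legal \<theta> (window x i n)}"

definition RS_language :: "('a \<Rightarrow> 'a list set) \<Rightarrow> 'a list set" where
  "RS_language \<theta> = {window x i n | x i n. x \<in> RS_subshift \<theta>}"

definition semi_mixing_wrt :: "('a \<Rightarrow> 'a list set) \<Rightarrow> 'a list set \<Rightarrow> bool" where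
  "semi_mixing_wrt \<theta> S \<longleftrightarrow>
     (\<exists>l. S \<subset> {w \<in> RS_language \<theta>. length w = l}) \<and>
     (\<forall>w \<in> RS_language \<theta>. \<exists>N. \<forall>n \<ge> N. \<exists>u s. length u = n \<and> s \<in> S \<and>
        w @ u @ s \<in> RS_language \<theta>)"

datatype ab = a | b
datatype abc = A | B | C

fun fib_subst :: "ab \<Rightarrow> ab list set" where
  "fib_subst a = {[a, b], [b, a]}"
| "fib_subst b = {[a]}"

fun trib_subst :: "abc \<Rightarrow> abc list set" where
  "trib_subst A = {[A, B], [B, A]}"
| "trib_subst B = {[A, C], [C, A]}"
| "trib_subst C = {[A]}"

fun metal_subst :: "nat \<Rightarrow> ab \<Rightarrow> ab list set" where
  "metal_subst m a = {replicate i a @ [b] @ replicate (m - i) a | i. i \<le> m}"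
| "metal_subst m b = {[a]}"

end

theory Submission
  imports Defs
begin

lemma sw_ConsI: "u \<in> \<theta> c \<Longrightarrow> v \<in> subst_word \<theta> p \<Longrightarrow> u @ v \<in> subst_word \<theta> (c # p)"
  by auto

lemma sw_appendI: "x \<in> subst_word \<theta> p \<Longrightarrow> y \<in> subst_word \<theta> q \<Longrightarrow> x @ y \<in> subst_word \<theta> (p @ q)"
proof (induction p arbitrary: x)
  case Nil then show ?case by simp
next
  case (Cons c p)
  then obtain u v where "x = u @ v" "u \<in> \<theta> c" "v \<in> subst_word \<theta> p" by auto
  then have "v @ y \<in> subst_word \<theta> (p @ q)" using Cons by blast
  then have "u @ (v @ y) \<in> subst_word \<theta> (c # (p @ q))" using sw_ConsI[of u \<theta> c "v @ y" "p @ q"] \<open>u \<in> \<theta> c\<close> by blast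
  then show ?case using \<open>x = u @ v\<close> by simp
qed

lemma sw_appendD: "z \<in> subst_word \<theta> (p @ q) \<Longrightarrow> \<exists>x y. z = x @ y \<and> x \<in> subst_word \<theta> p \<and> y \<in> subst_word \<theta> q"
proof (induction p arbitrary: z)
  case Nil then show ?case by force
next
  case (Cons c p)
  then obtain u v where "z = u @ v" "u \<in> \<theta> c" "v \<in> subst_word \<theta> (p @ q)" by auto
  with Cons.IH[of v] obtain x y where "v = x @ y" "x \<in> subst_word \<theta> p" "y \<in> subst_word \<theta> q" by blast
  then show ?case using \<open>z = u @ v\<close> \<open>u \<in> \<theta> c\<close> by (intro exI[of _ "u @ x"] exI[of _ y]) auto
qed

lemma sw_single: "u \<in> \<theta> c \<Longrightarrow> u \<in> subst_word \<theta> [c]"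
  using sw_ConsI[of u \<theta> c "[]" "[]"] by simp

lemma sw_ne: "(\<forall>c. \<theta> c \<noteq> {}) \<Longrightarrow> \<exists>x. x \<in> subst_word \<theta> p"
proof (induction p)
  case Nil then show ?case by simp
next
  case (Cons c p)
  then obtain v where "v \<in> subst_word \<theta> p" by blast
  moreover obtain u where "u \<in> \<theta> c" using Cons.prems by blast
  ultimately have "u @ v \<in> subst_word \<theta> (c # p)" by (rule sw_ConsI[rotated])
  then show ?case by blast
qed

lemma sw_len: "(\<forall>c x. x \<in> \<theta> c \<longrightarrow> length x = l c) \<Longrightarrow> x \<in> subst_word \<theta> p \<Longrightarrow> length x = sum_list (map l p)"
  by (induction p arbitrary: x) auto

lemma sw_len_ge: "(\<forall>c x. x \<in> \<theta> c \<longrightarrow> x \<noteq> []) \<Longrightarrow> x \<in> subst_word \<theta> p \<Longrightarrow> length p \<le> length x"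
proof (induction p arbitrary: x)
  case Nil then show ?case by simp
next
  case (Cons c p)
  then obtain u v where "x = u @ v" "u \<in> \<theta> c" "v \<in> subst_word \<theta> p" by auto
  then have "length p \<le> length v" "u \<noteq> []" using Cons by auto
  then show ?case using \<open>x = u @ v\<close> by (cases u) auto
qed

lemma sw_concat: "(\<forall>c. g c \<in> \<theta> c) \<Longrightarrow> concat (map g p) \<in> subst_word \<theta> p"
  by (induction p) (auto intro: sw_ConsI)

lemma sw_sublist: "(\<forall>c. \<theta> c \<noteq> {}) \<Longrightarrow> sublist p q \<Longrightarrow> x \<in> subst_word \<theta> p \<Longrightarrow> \<exists>y \<in> subst_word \<theta> q. sublist x y"
proof -
  assume ne: "\<forall>c. \<theta> c \<noteq> {}" and s: "sublist p q" and x: "x \<in> subst_word \<theta> p"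
  from s obtain q1 q2 where q: "q = q1 @ p @ q2" by (auto simp: sublist_def)
  obtain y1 where y1: "y1 \<in> subst_word \<theta> q1" using sw_ne[OF ne] by blast
  obtain y2 where y2: "y2 \<in> subst_word \<theta> q2" using sw_ne[OF ne] by blast
  have "y1 @ x @ y2 \<in> subst_word \<theta> q" unfolding q by (intro sw_appendI y1 x y2)
  then show ?thesis by blast
qed

lemma pow_0[simp]: "subst_pow \<theta> 0 Xs = Xs" by (simp add: subst_pow_def)
lemma pow_Suc: "subst_pow \<theta> (Suc k) Xs = subst_set \<theta> (subst_pow \<theta> k Xs)" by (simp add: subst_pow_def)
lemma mem_subst_set: "x \<in> subst_set \<theta> Xs \<longleftrightarrow> (\<exists>y\<in>Xs. x \<in> subst_word \<theta> y)" by (simp add: subst_set_def)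

lemma pow_appendI: "x \<in> subst_pow \<theta> k {p} \<Longrightarrow> y \<in> subst_pow \<theta> k {q} \<Longrightarrow> x @ y \<in> subst_pow \<theta> k {p @ q}"
proof (induction k arbitrary: x y)
  case 0 then show ?case by simp
next
  case (Suc k)
  then obtain x0 y0 where "x0 \<in> subst_pow \<theta> k {p}" "x \<in> subst_word \<theta> x0"
      "y0 \<in> subst_pow \<theta> k {q}" "y \<in> subst_word \<theta> y0" by (auto simp: pow_Suc mem_subst_set)
  with Suc.IH show ?case by (auto simp: pow_Suc mem_subst_set intro!: bexI[of _ "x0 @ y0"] sw_appendI)
qed

lemma pow_ne: "(\<forall>c. \<theta> c \<noteq> {}) \<Longrightarrow> \<exists>x. x \<in> subst_pow \<theta> k {p}"
proof (induction k)
  case 0 then show ?case by simp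
next
  case (Suc k)
  then obtain x where "x \<in> subst_pow \<theta> k {p}" by blast
  moreover obtain y where "y \<in> subst_word \<theta> x" using sw_ne Suc.prems by blast
  ultimately show ?case by (auto simp: pow_Suc mem_subst_set)
qed

lemma pow_len_ge: "(\<forall>c x. x \<in> \<theta> c \<longrightarrow> x \<noteq> []) \<Longrightarrow> x \<in> subst_pow \<theta> k {p} \<Longrightarrow> length p \<le> length x"
proof (induction k arbitrary: x)
  case 0 then show ?case by simp
next
  case (Suc k)
  then obtain x0 where "x0 \<in> subst_pow \<theta> k {p}" "x \<in> subst_word \<theta> x0" by (auto simp: pow_Suc mem_subst_set)
  have "length p \<le> length x0" using Suc.IH Suc.prems(1) \<open>x0 \<in> subst_pow \<theta> k {p}\<close> by blast
  moreover have "length x0 \<le> length x" using sw_len_ge[of \<theta> x x0] Suc.prems(1) \<open>x \<in> subst_word \<theta> x0\<close> by blast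
  ultimately show ?case by linarith
qed

lemma legal_sub: "legal \<theta> w \<Longrightarrow> sublist u w \<Longrightarrow> legal \<theta> u"
proof -
  assume "legal \<theta> w" "sublist u w"
  then obtain k c v where v: "v \<in> subst_pow \<theta> k {[c]}" "sublist w v" unfolding legal_def by blast
  have "sublist u v" using sublist_order.order.trans[OF \<open>sublist u w\<close> v(2)] .
  then show ?thesis unfolding legal_def using v(1) by blast
qed

lemma legal_letter: "legal \<theta> [c]"
  unfolding legal_def by (rule exI[of _ 0]) auto

lemma legal_sw: "(\<forall>c. \<theta> c \<noteq> {}) \<Longrightarrow> legal \<theta> z \<Longrightarrow> y \<in> subst_word \<theta> z \<Longrightarrow> legal \<theta> y"
proof -
  assume ne: "\<forall>c. \<theta> c \<noteq> {}" and "legal \<theta> z" and y: "y \<in> subst_word \<theta> z"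
  then obtain k c v where v: "v \<in> subst_pow \<theta> k {[c]}" "sublist z v" unfolding legal_def by blast
  then obtain y' where "y' \<in> subst_word \<theta> v" "sublist y y'" using sw_sublist[OF ne v(2) y] by blast
  then have yk: "y' \<in> subst_pow \<theta> (Suc k) {[c]}" and ys: "sublist y y'" using v unfolding pow_Suc mem_subst_set by blast+
  show ?thesis unfolding legal_def
    by (rule exI[of _ "Suc k"], rule exI[of _ c], rule exI[of _ y'], rule conjI[OF yk ys])
qed

lemma legal_pow: "(\<forall>c. \<theta> c \<noteq> {}) \<Longrightarrow> legal \<theta> z \<Longrightarrow> y \<in> subst_pow \<theta> k {z} \<Longrightarrow> legal \<theta> y"
proof (induction k arbitrary: y)
  case 0 then show ?case by simp
next
  case (Suc k)
  then obtain y0 where "y0 \<in> subst_pow \<theta> k {z}" "y \<in> subst_word \<theta> y0" by (auto simp: pow_Suc mem_subst_set)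
  then have "legal \<theta> y0" using Suc.IH Suc.prems by blast
  then show ?case using legal_sw[of \<theta> y0 y] Suc.prems \<open>y \<in> subst_word \<theta> y0\<close> by blast
qed


lemma ext2:
  assumes ne: "\<forall>c. \<theta> c \<noteq> {}" and nz: "\<forall>c x. x \<in> \<theta> c \<longrightarrow> x \<noteq> []"
    and T: "\<forall>c. \<exists>c1 c2. legal \<theta> [c1, c, c2]" and w: "legal \<theta> w"
  shows "\<exists>c d. legal \<theta> (c # w @ [d])"
proof -
  obtain k c v where v: "v \<in> subst_pow \<theta> k {[c]}" "sublist w v" using w unfolding legal_def by blast
  obtain c1 c2 where T1: "legal \<theta> [c1, c, c2]" using T by blast
  obtain v1 where v1: "v1 \<in> subst_pow \<theta> k {[c1]}" using pow_ne[OF ne] by blast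
  obtain v2 where v2: "v2 \<in> subst_pow \<theta> k {[c2]}" using pow_ne[OF ne] by blast
  have "v1 @ v \<in> subst_pow \<theta> k {[c1] @ [c]}" by (rule pow_appendI[OF v1 v(1)])
  then have "(v1 @ v) @ v2 \<in> subst_pow \<theta> k {([c1] @ [c]) @ [c2]}" by (rule pow_appendI[OF _ v2])
  then have "v1 @ v @ v2 \<in> subst_pow \<theta> k {[c1, c, c2]}" by simp
  then have L: "legal \<theta> (v1 @ v @ v2)" using legal_pow[OF ne T1] by blast
  have "v1 \<noteq> []" using pow_len_ge[OF nz v1] by auto
  have "v2 \<noteq> []" using pow_len_ge[OF nz v2] by auto
  obtain s t where vst: "v = s @ w @ t" using v(2) by (auto simp: sublist_def)
  define c' where "c' = last (v1 @ s)"
  define d' where "d' = hd (t @ v2)"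
  have e1: "v1 @ s = butlast (v1 @ s) @ [c']" using \<open>v1 \<noteq> []\<close> by (simp add: c'_def)
  have e2: "t @ v2 = d' # tl (t @ v2)" using \<open>v2 \<noteq> []\<close> by (simp add: d'_def)
  have "v1 @ v @ v2 = (v1 @ s) @ w @ (t @ v2)" using vst by simp
  also have "\<dots> = butlast (v1 @ s) @ (c' # w @ [d']) @ tl (t @ v2)"
    using e1 e2 by (metis append.assoc append_Cons append_Nil)
  finally have "sublist (c' # w @ [d']) (v1 @ v @ v2)" by (metis sublist_appendI)
  then show ?thesis using legal_sub[OF L] by blast
qed

lemma sublist_take_drop: "sublist (take n (drop s xs)) xs"
proof -
  have "xs = take s xs @ (take n (drop s xs) @ drop n (drop s xs))" by (simp only: append_take_drop_id)
  then show ?thesis by (metis sublist_appendI)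
qed

definition extw :: "('a \<Rightarrow> 'a list set) \<Rightarrow> 'a list \<Rightarrow> 'a list" where
  "extw \<theta> u = (SOME u'. \<exists>c d. u' = c # u @ [d] \<and> legal \<theta> u')"

definition WW :: "('a \<Rightarrow> 'a list set) \<Rightarrow> 'a list \<Rightarrow> nat \<Rightarrow> 'a list" where
  "WW \<theta> w j = (extw \<theta> ^^ j) w"

lemma extw_prop:
  assumes E: "\<forall>w. legal \<theta> w \<longrightarrow> (\<exists>c d. legal \<theta> (c # w @ [d]))" and u: "legal \<theta> u"
  shows "\<exists>c d. extw \<theta> u = c # u @ [d] \<and> legal \<theta> (extw \<theta> u)"
proof -
  have "\<exists>u'. \<exists>c d. u' = c # u @ [d] \<and> legal \<theta> u'" using E u by blast
  then have "\<exists>c d. extw \<theta> u = c # u @ [d] \<and> legal \<theta> (extw \<theta> u)"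
    unfolding extw_def by (rule someI_ex)
  then show ?thesis .
qed

lemma WW_legal:
  assumes E: "\<forall>w. legal \<theta> w \<longrightarrow> (\<exists>c d. legal \<theta> (c # w @ [d]))" and w: "legal \<theta> w"
  shows "legal \<theta> (WW \<theta> w j)"
proof (induction j)
  case 0 then show ?case using w by (simp add: WW_def)
next
  case (Suc j)
  then show ?case using extw_prop[OF E Suc] by (auto simp: WW_def)
qed

lemma WW_Suc:
  assumes E: "\<forall>w. legal \<theta> w \<longrightarrow> (\<exists>c d. legal \<theta> (c # w @ [d]))" and w: "legal \<theta> w"
  shows "\<exists>c d. WW \<theta> w (Suc j) = c # WW \<theta> w j @ [d]"
  using extw_prop[OF E WW_legal[OF E w, of j]] by (auto simp: WW_def)

lemma WW_len:
  assumes E: "\<forall>w. legal \<theta> w \<longrightarrow> (\<exists>c d. legal \<theta> (c # w @ [d]))" and w: "legal \<theta> w"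
  shows "length (WW \<theta> w j) = length w + 2 * j"
proof (induction j)
  case 0 then show ?case by (simp add: WW_def)
next
  case (Suc j)
  then show ?case using WW_Suc[OF E w, of j] by auto
qed

lemma WW_nth:
  assumes E: "\<forall>w. legal \<theta> w \<longrightarrow> (\<exists>c d. legal \<theta> (c # w @ [d]))" and w: "legal \<theta> w"
    and p: "p < length (WW \<theta> w j)"
  shows "WW \<theta> w (j + t) ! (p + t) = WW \<theta> w j ! p"
proof (induction t)
  case 0 then show ?case by simp
next
  case (Suc t)
  obtain c d where cd: "WW \<theta> w (Suc (j + t)) = c # WW \<theta> w (j + t) @ [d]" using WW_Suc[OF E w] by blast
  have "p + t < length (WW \<theta> w (j + t))" using p WW_len[OF E w] by simp
  then have "WW \<theta> w (j + Suc t) ! (p + Suc t) = WW \<theta> w (j + t) ! (p + t)"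
    using cd by (simp add: nth_append)
  then show ?case using Suc by simp
qed

definition xx :: "('a \<Rightarrow> 'a list set) \<Rightarrow> 'a list \<Rightarrow> int \<Rightarrow> 'a" where
  "xx \<theta> w i = WW \<theta> w (nat \<bar>i\<bar> + 1) ! nat (i + int (nat \<bar>i\<bar> + 1))"

lemma xx_eq:
  assumes E: "\<forall>w. legal \<theta> w \<longrightarrow> (\<exists>c d. legal \<theta> (c # w @ [d]))" and w: "legal \<theta> w"
    and J: "J \<ge> nat \<bar>i\<bar> + 1"
  shows "xx \<theta> w i = WW \<theta> w J ! nat (i + int J)"
proof -
  define j0 where "j0 = nat \<bar>i\<bar> + 1"
  define p where "p = nat (i + int j0)"
  have "p < length (WW \<theta> w j0)" using WW_len[OF E w] unfolding p_def j0_def by simp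
  then have A: "WW \<theta> w (j0 + (J - j0)) ! (p + (J - j0)) = WW \<theta> w j0 ! p" by (rule WW_nth[OF E w])
  have B: "j0 + (J - j0) = J" using J j0_def by simp
  have C: "p + (J - j0) = nat (i + int J)" using J unfolding p_def j0_def by simp
  have D: "WW \<theta> w J ! nat (i + int J) = WW \<theta> w j0 ! p" using A unfolding B C .
  have "xx \<theta> w i = WW \<theta> w j0 ! p" unfolding xx_def j0_def p_def ..
  then show ?thesis using D by simp
qed

lemma window_xx:
  assumes E: "\<forall>w. legal \<theta> w \<longrightarrow> (\<exists>c d. legal \<theta> (c # w @ [d]))" and w: "legal \<theta> w"
  shows "window (xx \<theta> w) i n = take n (drop (nat (i + int (nat \<bar>i\<bar> + n + 1))) (WW \<theta> w (nat \<bar>i\<bar> + n + 1)))"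
    (is "_ = take n (drop ?s (WW \<theta> w ?T))")
proof (rule nth_equalityI)
  have "length (WW \<theta> w ?T) = length w + 2 * ?T" by (rule WW_len[OF E w])
  then show "length (window (xx \<theta> w) i n) = length (take n (drop ?s (WW \<theta> w ?T)))"
    unfolding window_def by simp
next
  fix j assume "j < length (window (xx \<theta> w) i n)"
  then have j: "j < n" unfolding window_def by simp
  have L: "length (WW \<theta> w ?T) = length w + 2 * ?T" by (rule WW_len[OF E w])
  have nn: "0 \<le> i + int ?T" by (cases "i \<ge> 0") auto
  then have s0: "int ?s = i + int ?T" by simp
  then have "i + int j + int ?T = int (?s + j)" by simp
  then have eq: "nat (i + int j + int ?T) = ?s + j" by simp
  have "int (?s + j) < int (length (WW \<theta> w ?T))" using s0 L j by (cases "i \<ge> 0") auto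
  then have lt: "?s + j < length (WW \<theta> w ?T)" by linarith
  have "window (xx \<theta> w) i n ! j = xx \<theta> w (i + int j)" unfolding window_def using j by simp
  also have "\<dots> = WW \<theta> w ?T ! nat (i + int j + int ?T)"
    by (rule xx_eq[OF E w]) (use j in linarith)
  also have "\<dots> = take n (drop ?s (WW \<theta> w ?T)) ! j"
    using j lt unfolding eq by (simp add: nth_take nth_drop)
  finally show "window (xx \<theta> w) i n ! j = take n (drop ?s (WW \<theta> w ?T)) ! j" .
qed

lemma lang_eq:
  assumes E: "\<forall>w. legal \<theta> w \<longrightarrow> (\<exists>c d. legal \<theta> (c # w @ [d]))"
  shows "RS_language \<theta> = {w. legal \<theta> w}"
proof
  show "RS_language \<theta> \<subseteq> {w. legal \<theta> w}"
    unfolding RS_language_def RS_subshift_def by blast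
next
  show "{w. legal \<theta> w} \<subseteq> RS_language \<theta>"
  proof
    fix w assume "w \<in> {w. legal \<theta> w}"
    then have w: "legal \<theta> w" by simp
    have "xx \<theta> w \<in> RS_subshift \<theta>"
      unfolding RS_subshift_def
    proof (intro CollectI allI)
      fix i n
      show "legal \<theta> (window (xx \<theta> w) i n)"
        unfolding window_xx[OF E w]
        by (rule legal_sub[OF WW_legal[OF E w, of "nat \<bar>i\<bar> + n + 1"]]) (rule sublist_take_drop)
    qed
    moreover have "window (xx \<theta> w) 0 (length w) = w"
    proof (rule nth_equalityI)
      show "length (window (xx \<theta> w) 0 (length w)) = length w" unfolding window_def by simp
    next
      fix j assume "j < length (window (xx \<theta> w) 0 (length w))"
      then have j: "j < length w" unfolding window_def by simp
      have "window (xx \<theta> w) 0 (length w) ! j = xx \<theta> w (int j)" unfolding window_def using j by simp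
      also have "\<dots> = WW \<theta> w (0 + (j + 1)) ! (j + (j + 1))"
      proof -
        have "2 * int j + 1 = int (Suc (j + j))" by simp
        then have h: "nat (2 * int j + 1) = Suc (j + j)" by (simp only: nat_int)
        show ?thesis using xx_eq[OF E w, where J="j + 1" and i="int j"] h by simp
      qed
      also have "\<dots> = WW \<theta> w 0 ! j" by (rule WW_nth[OF E w]) (use j in \<open>simp add: WW_def\<close>)
      finally show "window (xx \<theta> w) 0 (length w) ! j = w ! j" by (simp add: WW_def)
    qed
    ultimately show "w \<in> RS_language \<theta>" unfolding RS_language_def
      by (intro CollectI exI[of _ "xx \<theta> w"] exI[of _ 0] exI[of _ "length w"]) simp
  qed
qed


lemma blk:
  assumes ne: "\<forall>c. \<theta> c \<noteq> {}" and len: "\<forall>c x. x \<in> \<theta> c \<longrightarrow> length x = l c"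
    and Cc: "\<forall>c r q. length r = K \<longrightarrow> Q (c # r) \<longrightarrow> q < l c \<longrightarrow>
               (\<exists>x\<in>subst_word \<theta> (c # r). P (take h (drop q x)) \<and> q + h \<le> length x)"
    and Qt: "\<forall>c r. Q (c # r) \<longrightarrow> Q r" and Qp: "\<forall>u v. Q (u @ v) \<longrightarrow> Q u"
  shows "Q (e @ r) \<Longrightarrow> length r = K \<Longrightarrow> p < sum_list (map l e) \<Longrightarrow>
         \<exists>x\<in>subst_word \<theta> (e @ r). P (take h (drop p x)) \<and> p + h \<le> length x"
proof (induction e arbitrary: p)
  case Nil then show ?case by simp
next
  case (Cons c e)
  show ?case
  proof (cases "p < l c")
    case True
    define r' where "r' = take K (e @ r)"
    define rest where "rest = drop K (e @ r)"
    have er: "e @ r = r' @ rest" unfolding r'_def rest_def by (simp only: append_take_drop_id)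
    have lr: "length r' = K" unfolding r'_def using Cons.prems(2) by simp
    have "Q ((c # r') @ rest)" using Cons.prems(1) er by simp
    then have Qc: "Q (c # r')" using Qp by blast
    obtain x0 where x0: "x0 \<in> subst_word \<theta> (c # r')" "P (take h (drop p x0))" "p + h \<le> length x0"
      using Cc lr Qc True by blast
    obtain xr where xr: "xr \<in> subst_word \<theta> rest" using sw_ne[OF ne] by blast
    have "x0 @ xr \<in> subst_word \<theta> ((c # r') @ rest)" by (rule sw_appendI[OF x0(1) xr])
    then have mem: "x0 @ xr \<in> subst_word \<theta> ((c # e) @ r)" using er by simp
    have "take h (drop p (x0 @ xr)) = take h (drop p x0)" using x0(3) by simp
    then show ?thesis using mem x0 by (intro bexI[of _ "x0 @ xr"]) auto
  next
    case False
    have Q': "Q (e @ r)" using Cons.prems(1) Qt by simp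
    have "p - l c < sum_list (map l e)" using Cons.prems(3) False by simp
    then obtain x' where x': "x' \<in> subst_word \<theta> (e @ r)" "P (take h (drop (p - l c) x'))" "p - l c + h \<le> length x'"
      using Cons.IH[OF Q' Cons.prems(2)] by blast
    obtain x1 where x1: "x1 \<in> \<theta> c" using ne by blast
    have lx1: "length x1 = l c" using len x1 by blast
    have mem: "x1 @ x' \<in> subst_word \<theta> ((c # e) @ r)" using sw_ConsI[of x1 \<theta> c x' "e @ r"] x1 x'(1) by simp
    have "drop p (x1 @ x') = drop (p - l c) x'" using lx1 False by simp
    then show ?thesis using mem x' lx1 False by (intro bexI[of _ "x1 @ x'"]) auto
  qed
qed

lemma G2:
  assumes occ: "\<forall>c. \<exists>d y. y \<in> \<theta> d \<and> c \<in> set y" and w: "legal \<theta> w"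
  shows "\<exists>z y. legal \<theta> z \<and> y \<in> subst_word \<theta> z \<and> sublist w y"
proof -
  obtain k c v where v: "v \<in> subst_pow \<theta> k {[c]}" "sublist w v" using w unfolding legal_def by blast
  show ?thesis
  proof (cases k)
    case 0
    then have vc: "v = [c]" using v by simp
    obtain d y where dy: "y \<in> \<theta> d" "c \<in> set y" using occ by blast
    obtain ys1 ys2 where "y = ys1 @ c # ys2" using split_list[OF dy(2)] by blast
    then have "sublist [c] y" by (metis append_Cons append_Nil sublist_appendI)
    then have "sublist w y" using v(2) vc sublist_order.order.trans by blast
    then show ?thesis using sw_single[of y \<theta> d, OF dy(1)] legal_letter[of \<theta> d] by blast
  next
    case (Suc k')
    then obtain z where z: "z \<in> subst_pow \<theta> k' {[c]}" "v \<in> subst_word \<theta> z"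
      using v(1) by (auto simp: pow_Suc mem_subst_set)
    have "legal \<theta> z" unfolding legal_def using z(1) by blast
    then show ?thesis using z(2) v(2) by blast
  qed
qed

lemma rext:
  assumes E: "\<forall>w. legal \<theta> w \<longrightarrow> (\<exists>c d. legal \<theta> (c # w @ [d]))" and z: "legal \<theta> z"
  shows "\<exists>e. length e = L \<and> legal \<theta> (z @ e)"
proof (induction L)
  case 0 then show ?case using z by simp
next
  case (Suc L)
  then obtain e where e: "length e = L" "legal \<theta> (z @ e)" by blast
  then obtain c d where "legal \<theta> (c # (z @ e) @ [d])" using E by blast
  then have "legal \<theta> (z @ e @ [d])" by (rule legal_sub) (metis append.assoc append_Cons append_Nil sublist_append_leftI)
  then show ?case using e(1) by (intro exI[of _ "e @ [d]"]) simp
qed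

lemma sum_ge_len: "\<forall>c. (1::nat) \<le> l c \<Longrightarrow> length e \<le> sum_list (map l e)"
proof (induction e)
  case Nil then show ?case by simp
next
  case (Cons c e)
  have "1 \<le> l c" using Cons.prems by simp
  with Cons.IH[OF Cons.prems] show ?case by simp
qed

lemma mixing:
  assumes ne: "\<forall>c. \<theta> c \<noteq> {}" and nz: "\<forall>c x. x \<in> \<theta> c \<longrightarrow> x \<noteq> []"
    and occ: "\<forall>c. \<exists>d y. y \<in> \<theta> d \<and> c \<in> set y"
    and E: "\<forall>w. legal \<theta> w \<longrightarrow> (\<exists>c d. legal \<theta> (c # w @ [d]))"
    and g: "\<forall>c. g c \<in> \<theta> c" and gQ: "\<forall>e. Q (concat (map g e))"
    and len: "\<forall>c x. x \<in> \<theta> c \<longrightarrow> length x = l c"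
    and Cc: "\<forall>c r q. length r = K \<longrightarrow> Q (c # r) \<longrightarrow> q < l c \<longrightarrow>
               (\<exists>x\<in>subst_word \<theta> (c # r). P (take h (drop q x)) \<and> q + h \<le> length x)"
    and Qt: "\<forall>c r. Q (c # r) \<longrightarrow> Q r" and Qp: "\<forall>u v. Q (u @ v) \<longrightarrow> Q u"
    and w: "legal \<theta> w"
  shows "\<exists>N. \<forall>n\<ge>N. \<exists>u s. length u = n \<and> P s \<and> legal \<theta> (w @ u @ s)"
proof -
  obtain y0 v where y0: "legal \<theta> y0" "v \<in> subst_word \<theta> y0" "sublist w v" using G2[OF occ w] by blast
  obtain z y where zy: "legal \<theta> z" "y \<in> subst_word \<theta> z" "sublist y0 y" using G2[OF occ y0(1)] by blast
  obtain v' where v': "v' \<in> subst_word \<theta> y" "sublist v v'" using sw_sublist[OF ne zy(3) y0(2)] by blast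
  have "sublist w v'" using y0(3) v'(2) sublist_order.order.trans by blast
  then obtain v1 v3 where vv: "v' = v1 @ w @ v3" by (auto simp: sublist_def)
  have l1: "\<forall>c. 1 \<le> l c"
  proof
    fix c
    obtain x where x: "x \<in> \<theta> c" using ne by blast
    then have "x \<noteq> []" using nz by blast
    then show "1 \<le> l c" using len x by (metis One_nat_def Suc_leI length_greater_0_conv)
  qed
  show ?thesis
  proof (intro exI[of _ "length v3"] allI impI)
    fix n assume n: "length v3 \<le> n"
    define p where "p = n - length v3"
    obtain e0 where e0: "length e0 = p + K + 1" "legal \<theta> (z @ e0)" using rext[OF E zy(1)] by blast
    define Eg where "Eg = concat (map g e0)"
    have Eg: "Eg \<in> subst_word \<theta> e0" unfolding Eg_def by (rule sw_concat[OF g])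
    have lEg: "p + K + 1 \<le> length Eg" using sw_len_ge[OF nz Eg] e0(1) by simp
    define e where "e = take (length Eg - K) Eg"
    define r where "r = drop (length Eg - K) Eg"
    have er: "e @ r = Eg" unfolding e_def r_def by simp
    have lr: "length r = K" unfolding r_def using lEg by simp
    have le: "p + 1 \<le> length e" unfolding e_def using lEg by simp
    have "p < sum_list (map l e)" using sum_ge_len[OF l1, of e] le by simp
    moreover have "Q (e @ r)" using gQ er unfolding Eg_def by simp
    ultimately obtain x where x: "x \<in> subst_word \<theta> (e @ r)" "P (take h (drop p x))" "p + h \<le> length x"
      using blk[OF ne len Cc Qt Qp] lr by blast
    have "y @ Eg \<in> subst_word \<theta> (z @ e0)" by (rule sw_appendI[OF zy(2) Eg])
    then have L1: "legal \<theta> (y @ Eg)" using legal_sw[OF ne e0(2)] by blast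
    have "v' @ x \<in> subst_word \<theta> (y @ Eg)" using sw_appendI[OF v'(1) x(1)] er by simp
    then have L2: "legal \<theta> (v' @ x)" using legal_sw[OF ne L1] by blast
    define u where "u = v3 @ take p x"
    define s where "s = take h (drop p x)"
    have "x = take p x @ s @ drop h (drop p x)" unfolding s_def by (simp only: append_take_drop_id)
    then have "v' @ x = v1 @ (w @ u @ s) @ drop h (drop p x)" unfolding vv u_def
      by (metis append.assoc)
    then have "legal \<theta> (w @ u @ s)" using legal_sub[OF L2] by (metis sublist_appendI)
    moreover have "length u = n"
    proof -
      have "p \<le> length x" using x(3) by simp
      then show ?thesis unfolding u_def using n p_def by simp
    qed
    ultimately show "\<exists>u s. length u = n \<and> P s \<and> legal \<theta> (w @ u @ s)" using x(2) unfolding s_def by blast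
  qed
qed

lemma semi_generic:
  assumes ne: "\<forall>c. \<theta> c \<noteq> {}" and nz: "\<forall>c x. x \<in> \<theta> c \<longrightarrow> x \<noteq> []"
    and occ: "\<forall>c. \<exists>d y. y \<in> \<theta> d \<and> c \<in> set y"
    and T: "\<forall>c. \<exists>c1 c2. legal \<theta> [c1, c, c2]"
    and g: "\<forall>c. g c \<in> \<theta> c" and gQ: "\<forall>e. Q (concat (map g e))"
    and len: "\<forall>c x. x \<in> \<theta> c \<longrightarrow> length x = l c"
    and Cc: "\<forall>c r q. length r = K \<longrightarrow> Q (c # r) \<longrightarrow> q < l c \<longrightarrow>
               (\<exists>x\<in>subst_word \<theta> (c # r). take h (drop q x) \<in> S \<and> q + h \<le> length x)"
    and Qt: "\<forall>c r. Q (c # r) \<longrightarrow> Q r" and Qp: "\<forall>u v. Q (u @ v) \<longrightarrow> Q u"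
    and S1: "\<forall>s\<in>S. legal \<theta> s \<and> length s = ll" and S2: "legal \<theta> tt" "length tt = ll" "tt \<notin> S"
  shows "semi_mixing_wrt \<theta> S"
proof -
  have E: "\<forall>w. legal \<theta> w \<longrightarrow> (\<exists>c d. legal \<theta> (c # w @ [d]))" using ext2[OF ne nz T] by blast
  have L: "RS_language \<theta> = {w. legal \<theta> w}" by (rule lang_eq[OF E])
  have part1: "S \<subset> {w \<in> RS_language \<theta>. length w = ll}" unfolding L using S1 S2 by blast
  have part2: "\<forall>w \<in> RS_language \<theta>. \<exists>N. \<forall>n \<ge> N. \<exists>u s. length u = n \<and> s \<in> S \<and> w @ u @ s \<in> RS_language \<theta>"
    unfolding L using mixing[OF ne nz occ E g gQ len Cc Qt Qp] by simp
  show ?thesis unfolding semi_mixing_wrt_def using part1 part2 by blast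
qed


fun nff :: "'a \<Rightarrow> 'a list \<Rightarrow> bool" where
  "nff f (x # y # r) = (\<not> (x = f \<and> y = f) \<and> nff f (y # r))"
| "nff f _ = True"

lemma nff_tl: "\<forall>c r. nff f (c # r) \<longrightarrow> nff f r"
proof (intro allI impI)
  fix c r assume "nff f (c # r)" then show "nff f r" by (cases r) auto
qed

lemma nff_pre_aux: "nff f (u @ v) \<Longrightarrow> nff f u"
proof (induction u)
  case Nil then show ?case by simp
next
  case (Cons x u)
  note IH = Cons.IH and pr = Cons.prems
  show ?case
  proof (cases u)
    case Nil then show ?thesis by simp
  next
    case (Cons y u')
    have "nff f (x # y # (u' @ v))" using pr Cons by simp
    then have h1: "\<not> (x = f \<and> y = f)" and h2: "nff f (u @ v)" using Cons by simp_all
    have "nff f u" using IH[OF h2] .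
    then show ?thesis using h1 Cons by simp
  qed
qed

lemma nff_pre: "\<forall>u v. nff f (u @ v) \<longrightarrow> nff f u"
  by (intro allI impI) (rule nff_pre_aux)

lemma nff_app: "nff f u \<Longrightarrow> nff f v \<Longrightarrow> (v \<noteq> [] \<Longrightarrow> hd v \<noteq> f) \<Longrightarrow> nff f (u @ v)"
proof (induction u)
  case Nil then show ?case by simp
next
  case (Cons x u)
  note IH = Cons.IH and pr = Cons.prems
  show ?case
  proof (cases u)
    case Nil
    show ?thesis
    proof (cases v)
      case Nil2: Nil then show ?thesis using Nil pr(1) by simp
    next
      case (Cons y v')
      then have "y \<noteq> f" using pr(3) by simp
      then show ?thesis using Nil Cons pr(2) by simp
    qed
  next
    case (Cons y u')
    have h1: "\<not> (x = f \<and> y = f)" using pr(1) Cons by simp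
    have "nff f u" using pr(1) Cons by simp
    then have "nff f (u @ v)" using IH pr(2,3) by blast
    then show ?thesis using h1 Cons by simp
  qed
qed

lemma nff_concat:
  assumes "\<forall>c. g c \<noteq> [] \<and> hd (g c) \<noteq> f \<and> nff f (g c)"
  shows "\<forall>e. nff f (concat (map g e))"
proof
  fix e show "nff f (concat (map g e))"
  proof (induction e)
    case Nil then show ?case by simp
  next
    case (Cons c e)
    have "concat (map g e) \<noteq> [] \<Longrightarrow> hd (concat (map g e)) \<noteq> f"
      using assms by (cases e) auto
    then show ?case using nff_app[of f "g c" "concat (map g e)"] assms Cons.IH by simp
  qed
qed

lemma pow_step: "y \<in> subst_pow \<theta> k X \<Longrightarrow> x \<in> subst_word \<theta> y \<Longrightarrow> x \<in> subst_pow \<theta> (Suc k) X"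
  by (auto simp: pow_Suc mem_subst_set)

lemma legal_via: "x \<in> subst_pow \<theta> k {[c]} \<Longrightarrow> sublist u x \<Longrightarrow> legal \<theta> u"
  unfolding legal_def by blast

lemma sw2: "subst_word \<theta> [c, d] = {u @ v | u v. u \<in> \<theta> c \<and> v \<in> \<theta> d}"
  by auto

lemma bex_app2: "(\<exists>x\<in>{u @ v | u v. u \<in> X \<and> v \<in> Y}. P x) \<longleftrightarrow> (\<exists>u\<in>X. \<exists>v\<in>Y. P (u @ v))"
  by blast

(* Fibonacci *)

lemma fib_word: "[a,b,a,a,b,a,a,b] \<in> subst_pow fib_subst 4 {[a]}"
proof -
  have 1: "[b,a] \<in> subst_pow fib_subst (Suc 0) {[a]}"
    by (rule pow_step[of "[a]"]) (auto)
  have "[a] @ [a,b] @ [] \<in> subst_word fib_subst [b,a]" by (intro sw_ConsI) simp_all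
  then have 2: "[a,a,b] \<in> subst_pow fib_subst (Suc (Suc 0)) {[a]}" using pow_step[OF 1] by simp
  have "[a,b] @ [a,b] @ [a] @ [] \<in> subst_word fib_subst [a,a,b]" by (intro sw_ConsI) simp_all
  then have 3: "[a,b,a,b,a] \<in> subst_pow fib_subst (Suc (Suc (Suc 0))) {[a]}" using pow_step[OF 2] by simp
  have "[a,b] @ [a] @ [a,b] @ [a] @ [a,b] @ [] \<in> subst_word fib_subst [a,b,a,b,a]" by (intro sw_ConsI) simp_all
  then have "[a,b,a,a,b,a,a,b] \<in> subst_pow fib_subst (Suc (Suc (Suc (Suc 0)))) {[a]}" using pow_step[OF 3] by simp
  then show ?thesis by (simp add: numeral_eq_Suc)
qed

lemma fib_semi: "semi_mixing_wrt fib_subst {[a, b], [b, a]}"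
proof (rule semi_generic[where g="\<lambda>c. if c = a then [a,b] else [a]" and Q="nff b"
      and l="\<lambda>c. if c = a then 2 else 1" and K=1 and h=2 and ll=2 and tt="[a,a]"])
  show "\<forall>c. fib_subst c \<noteq> {}" by (intro allI, case_tac c) auto
  show "\<forall>c x. x \<in> fib_subst c \<longrightarrow> x \<noteq> []" by (intro allI, case_tac c) auto
  show "\<forall>c. \<exists>d y. y \<in> fib_subst d \<and> c \<in> set y"
    by (intro allI, rule exI[of _ a], rule exI[of _ "[a,b]"], case_tac c) auto
  have W: "legal fib_subst u" if "sublist u [a,b,a,a,b,a,a,b]" for u
    using legal_via[OF fib_word that] .
  show "\<forall>c. \<exists>c1 c2. legal fib_subst [c1, c, c2]"
  proof
    fix c show "\<exists>c1 c2. legal fib_subst [c1, c, c2]"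
    proof (cases c)
      case a
      have "sublist [b,a,a] [a,b,a,a,b,a,a,b]" unfolding sublist_def
        by (rule exI[of _ "[a]"], rule exI[of _ "[b,a,a,b]"]) simp
      then show ?thesis using W a by blast
    next
      case b
      have "sublist [a,b,a] [a,b,a,a,b,a,a,b]" unfolding sublist_def
        by (rule exI[of _ "[]"], rule exI[of _ "[a,b,a,a,b]"]) simp
      then show ?thesis using W b by blast
    qed
  qed
  show "\<forall>c. (if c = a then [a,b] else [a]) \<in> fib_subst c" by (intro allI, case_tac c) auto
  show "\<forall>e. nff b (concat (map (\<lambda>c. if c = a then [a,b] else [a]) e))"
    by (rule nff_concat) auto
  show "\<forall>c x. x \<in> fib_subst c \<longrightarrow> length x = (if c = a then 2 else 1)"
    by (intro allI, case_tac c) auto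
  show "\<forall>c r q. length r = 1 \<longrightarrow> nff b (c # r) \<longrightarrow> q < (if c = a then 2 else 1) \<longrightarrow>
          (\<exists>x\<in>subst_word fib_subst (c # r). take 2 (drop q x) \<in> {[a, b], [b, a]} \<and> q + 2 \<le> length x)"
  proof (intro allI impI)
    fix c r q assume r1: "length r = (1::nat)" and nf: "nff b (c # r)" and q: "q < (if c = a then 2 else (1::nat))"
    obtain d where rd: "r = [d]" using r1 by (cases r) auto
    show "\<exists>x\<in>subst_word fib_subst (c # r). take 2 (drop q x) \<in> {[a, b], [b, a]} \<and> q + 2 \<le> length x"
      using nf q unfolding rd sw2 bex_app2
      by (cases c; cases d; cases q) auto
  qed
  show "\<forall>c r. nff b (c # r) \<longrightarrow> nff b r" by (rule nff_tl)
  show "\<forall>u v. nff b (u @ v) \<longrightarrow> nff b u" by (rule nff_pre)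
  show "\<forall>s\<in>{[a, b], [b, a]}. legal fib_subst s \<and> length s = 2"
  proof -
    have "sublist [a,b] [a,b,a,a,b,a,a,b]" by (metis append_Cons append_Nil sublist_append_rightI)
    moreover have "sublist [b,a] [a,b,a,a,b,a,a,b]" unfolding sublist_def
        by (rule exI[of _ "[a]"], rule exI[of _ "[a,b,a,a,b]"]) simp
    ultimately show ?thesis using W by auto
  qed
  show "legal fib_subst [a,a]"
  proof -
    have "sublist [a,a] [a,b,a,a,b,a,a,b]" unfolding sublist_def
        by (rule exI[of _ "[a,b]"], rule exI[of _ "[b,a,a,b]"]) simp
    then show ?thesis using W by blast
  qed
  show "length [a,a] = 2" by simp
  show "[a,a] \<notin> {[a, b], [b, a]}" by simp
qed


(* Tribonacci *)

lemma trib_word: "[A,B,A,C,A,B,A,A,B,A,C,A,B] \<in> subst_pow trib_subst 4 {[A]}"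
proof -
  have 1: "[A,B] \<in> subst_pow trib_subst (Suc 0) {[A]}"
    by (rule pow_step[of "[A]"]) (auto)
  have "[A,B] @ [A,C] @ [] \<in> subst_word trib_subst [A,B]" by (intro sw_ConsI) simp_all
  then have 2: "[A,B,A,C] \<in> subst_pow trib_subst (Suc (Suc 0)) {[A]}" using pow_step[OF 1] by simp
  have "[A,B] @ [A,C] @ [A,B] @ [A] @ [] \<in> subst_word trib_subst [A,B,A,C]" by (intro sw_ConsI) simp_all
  then have 3: "[A,B,A,C,A,B,A] \<in> subst_pow trib_subst (Suc (Suc (Suc 0))) {[A]}" using pow_step[OF 2] by simp
  have "[A,B] @ [A,C] @ [A,B] @ [A] @ [A,B] @ [A,C] @ [A,B] @ [] \<in> subst_word trib_subst [A,B,A,C,A,B,A]"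
    by (intro sw_ConsI) simp_all
  then have "[A,B,A,C,A,B,A,A,B,A,C,A,B] \<in> subst_pow trib_subst (Suc (Suc (Suc (Suc 0)))) {[A]}"
    using pow_step[OF 3] by simp
  then show ?thesis by (simp add: numeral_eq_Suc)
qed

lemma trib_semi: "semi_mixing_wrt trib_subst {[A, B], [B, A], [A, C], [C, A]}"
proof (rule semi_generic[where g="\<lambda>c. if c = A then [A,B] else if c = B then [A,C] else [A]" and Q="nff C"
      and l="\<lambda>c. if c = C then 1 else 2" and K=1 and h=2 and ll=2 and tt="[A,A]"])
  show "\<forall>c. trib_subst c \<noteq> {}" by (intro allI, case_tac c) auto
  show "\<forall>c x. x \<in> trib_subst c \<longrightarrow> x \<noteq> []" by (intro allI, case_tac c) auto
  show "\<forall>c. \<exists>d y. y \<in> trib_subst d \<and> c \<in> set y"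
  proof
    fix c show "\<exists>d y. y \<in> trib_subst d \<and> c \<in> set y"
      by (cases c) (rule exI[of _ A], rule exI[of _ "[A,B]"], simp,
                    rule exI[of _ A], rule exI[of _ "[A,B]"], simp,
                    rule exI[of _ B], rule exI[of _ "[A,C]"], simp)
  qed
  have W: "legal trib_subst u" if "sublist u [A,B,A,C,A,B,A,A,B,A,C,A,B]" for u
    using legal_via[OF trib_word that] .
  show "\<forall>c. \<exists>c1 c2. legal trib_subst [c1, c, c2]"
  proof
    fix c show "\<exists>c1 c2. legal trib_subst [c1, c, c2]"
    proof (cases c)
      case A
      have "sublist [B,A,C] [A,B,A,C,A,B,A,A,B,A,C,A,B]" unfolding sublist_def
        by (rule exI[of _ "[A]"], rule exI[of _ "[A,B,A,A,B,A,C,A,B]"]) simp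
      then show ?thesis using W A by blast
    next
      case B
      have "sublist [A,B,A] [A,B,A,C,A,B,A,A,B,A,C,A,B]" unfolding sublist_def
        by (rule exI[of _ "[]"], rule exI[of _ "[C,A,B,A,A,B,A,C,A,B]"]) simp
      then show ?thesis using W B by blast
    next
      case C
      have "sublist [A,C,A] [A,B,A,C,A,B,A,A,B,A,C,A,B]" unfolding sublist_def
        by (rule exI[of _ "[A,B]"], rule exI[of _ "[B,A,A,B,A,C,A,B]"]) simp
      then show ?thesis using W C by blast
    qed
  qed
  show "\<forall>c. (if c = A then [A,B] else if c = B then [A,C] else [A]) \<in> trib_subst c"
    by (intro allI, case_tac c) auto
  show "\<forall>e. nff C (concat (map (\<lambda>c. if c = A then [A,B] else if c = B then [A,C] else [A]) e))"
    by (rule nff_concat) auto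
  show "\<forall>c x. x \<in> trib_subst c \<longrightarrow> length x = (if c = C then 1 else 2)"
    by (intro allI, case_tac c) auto
  show "\<forall>c r q. length r = 1 \<longrightarrow> nff C (c # r) \<longrightarrow> q < (if c = C then 1 else 2) \<longrightarrow>
          (\<exists>x\<in>subst_word trib_subst (c # r). take 2 (drop q x) \<in> {[A, B], [B, A], [A, C], [C, A]} \<and> q + 2 \<le> length x)"
  proof (intro allI impI)
    fix c r q assume r1: "length r = (1::nat)" and nf: "nff C (c # r)" and q: "q < (if c = C then 1 else (2::nat))"
    obtain d where rd: "r = [d]" using r1 by (cases r) auto
    show "\<exists>x\<in>subst_word trib_subst (c # r). take 2 (drop q x) \<in> {[A, B], [B, A], [A, C], [C, A]} \<and> q + 2 \<le> length x"
      using nf q unfolding rd sw2 bex_app2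
      by (cases c; cases d; cases q) auto
  qed
  show "\<forall>c r. nff C (c # r) \<longrightarrow> nff C r" by (rule nff_tl)
  show "\<forall>u v. nff C (u @ v) \<longrightarrow> nff C u" by (rule nff_pre)
  show "\<forall>s\<in>{[A, B], [B, A], [A, C], [C, A]}. legal trib_subst s \<and> length s = 2"
  proof -
    have "sublist [A,B] [A,B,A,C,A,B,A,A,B,A,C,A,B]" unfolding sublist_def
        by (rule exI[of _ "[]"], rule exI[of _ "[A,C,A,B,A,A,B,A,C,A,B]"]) simp
    moreover have "sublist [B,A] [A,B,A,C,A,B,A,A,B,A,C,A,B]" unfolding sublist_def
        by (rule exI[of _ "[A]"], rule exI[of _ "[C,A,B,A,A,B,A,C,A,B]"]) simp
    moreover have "sublist [A,C] [A,B,A,C,A,B,A,A,B,A,C,A,B]" unfolding sublist_def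
        by (rule exI[of _ "[A,B]"], rule exI[of _ "[A,B,A,A,B,A,C,A,B]"]) simp
    moreover have "sublist [C,A] [A,B,A,C,A,B,A,A,B,A,C,A,B]" unfolding sublist_def
        by (rule exI[of _ "[A,B,A]"], rule exI[of _ "[B,A,A,B,A,C,A,B]"]) simp
    ultimately show ?thesis using W by auto
  qed
  show "legal trib_subst [A,A]"
  proof -
    have "sublist [A,A] [A,B,A,C,A,B,A,A,B,A,C,A,B]" unfolding sublist_def
        by (rule exI[of _ "[A,B,A,C,A,B]"], rule exI[of _ "[B,A,C,A,B]"]) simp
    then show ?thesis using W by blast
  qed
  show "length [A,A] = 2" by simp
  show "[A,A] \<notin> {[A, B], [B, A], [A, C], [C, A]}" by simp
qed


(* Metallic mean *)

lemma nff_Cons_nf: "x \<noteq> f \<Longrightarrow> nff f z \<Longrightarrow> nff f (x # z)"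
  by (cases z) auto

lemma nff_rep: "x \<noteq> f \<Longrightarrow> nff f (replicate n x @ [y])"
  by (induction n) (auto intro: nff_Cons_nf)

lemma metal_mem: "i \<le> m \<Longrightarrow> replicate i a @ [b] @ replicate (m - i) a \<in> metal_subst m a"
  by auto

lemma metal_len: "x \<in> metal_subst m c \<Longrightarrow> length x = (if c = a then m + 1 else 1)"
  by (cases c) auto

lemma legal_lvl1: "x \<in> \<theta> c \<Longrightarrow> sublist u x \<Longrightarrow> legal \<theta> u"
proof -
  assume x: "x \<in> \<theta> c" and u: "sublist u x"
  have "x \<in> subst_pow \<theta> (Suc 0) {[c]}" by (rule pow_step[of "[c]"]) (use x sw_single[of x \<theta> c] in auto)
  then show ?thesis by (rule legal_via[OF _ u])
qed

definition gm :: "nat \<Rightarrow> ab \<Rightarrow> ab list" where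
  "gm m c = (if c = a then replicate m a @ [b] else [a])"

lemma gm_mem: "gm m c \<in> metal_subst m c"
proof (cases c)
  case a
  have "replicate m a @ [b] @ replicate (m - m) a \<in> metal_subst m a" by (rule metal_mem) simp
  then show ?thesis using a by (simp add: gm_def)
next
  case b then show ?thesis by (simp add: gm_def)
qed

lemma gm_pref: "j < length (concat (map (gm m) r)) \<Longrightarrow> j < m \<Longrightarrow> concat (map (gm m) r) ! j = a"
proof (induction r arbitrary: j)
  case Nil then show ?case by simp
next
  case (Cons c r)
  show ?case
  proof (cases c)
    case a
    then show ?thesis using Cons.prems by (simp add: gm_def nth_append)
  next
    case b
    show ?thesis
    proof (cases j)
      case 0 then show ?thesis using b by (simp add: gm_def)
    next
      case (Suc j')
      then have "concat (map (gm m) r) ! j' = a" using Cons.prems b by (intro Cons.IH) (auto simp: gm_def)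
      moreover have "gm m b = [a]" by (simp add: gm_def)
      ultimately show ?thesis using b Suc by simp
    qed
  qed
qed

lemma gm_len: "length r \<le> length (concat (map (gm m) r))"
  by (induction r) (auto simp: gm_def)

lemma gm_take: "q \<le> m \<Longrightarrow> length r \<ge> m \<Longrightarrow> take q (concat (map (gm m) r)) = replicate q a"
proof -
  assume q: "q \<le> m" and r: "length r \<ge> m"
  have L: "q \<le> length (concat (map (gm m) r))" using gm_len[where r=r and m=m] q r by simp
  show ?thesis
  proof (rule nth_equalityI)
    show "length (take q (concat (map (gm m) r))) = length (replicate q a)" using L by simp
  next
    fix j assume "j < length (take q (concat (map (gm m) r)))"
    then have j: "j < q" using L by simp
    then show "take q (concat (map (gm m) r)) ! j = replicate q a ! j"
      using gm_pref[where j=j and r=r and m=m] L q by simp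
  qed
qed

lemma metal_C:
  assumes m: "m \<ge> 2"
  shows "\<forall>c r q. length r = m \<longrightarrow> nff b (c # r) \<longrightarrow> q < (if c = a then m + 1 else 1) \<longrightarrow>
          (\<exists>x\<in>subst_word (metal_subst m) (c # r).
              take (m + 1) (drop q x) \<in> {replicate i a @ [b] @ replicate (m - i) a | i. i \<le> m} \<and> q + (m + 1) \<le> length x)"
proof (intro allI impI)
  obtain k where k: "m = k + 2" using m by (metis add.commute le_add_diff_inverse)
  fix c r q assume lr: "length r = m" and nf: "nff b (c # r)" and q: "q < (if c = a then m + 1 else 1)"
  show "\<exists>x\<in>subst_word (metal_subst m) (c # r).
            take (m + 1) (drop q x) \<in> {replicate i a @ [b] @ replicate (m - i) a | i. i \<le> m} \<and> q + (m + 1) \<le> length x"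
  proof (cases c)
    case a
    then have qm: "q \<le> m" using q by simp
    define D where "D = concat (map (gm m) r)"
    have D: "D \<in> subst_word (metal_subst m) r" unfolding D_def by (rule sw_concat) (intro allI gm_mem)
    have ga: "replicate m a @ [b] \<in> metal_subst m a" using gm_mem[of m a] by (simp add: gm_def)
    have x: "(replicate m a @ [b]) @ D \<in> subst_word (metal_subst m) (c # r)"
      unfolding a by (rule sw_ConsI[OF ga D])
    have LD: "m \<le> length D" using gm_len[where r=r and m=m] lr unfolding D_def by simp
    have tq: "take q D = replicate q a" unfolding D_def by (rule gm_take[OF qm]) (use lr in simp)
    have "drop q ((replicate m a @ [b]) @ D) = replicate (m - q) a @ [b] @ D" using qm by simp
    then have "take (m + 1) (drop q ((replicate m a @ [b]) @ D)) = replicate (m - q) a @ [b] @ take q D"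
      using qm by simp
    also have "\<dots> = replicate (m - q) a @ [b] @ replicate (m - (m - q)) a" using tq qm by simp
    finally have P1: "take (m + 1) (drop q ((replicate m a @ [b]) @ D)) \<in> {replicate i a @ [b] @ replicate (m - i) a | i. i \<le> m}"
      using qm by (intro CollectI exI[of _ "m - q"] conjI) simp_all
    have P2: "q + (m + 1) \<le> length ((replicate m a @ [b]) @ D)" using LD qm by simp
    show ?thesis by (rule bexI[where x="(replicate m a @ [b]) @ D"], rule conjI[OF P1 P2], rule x)
  next
    case b
    then have q0: "q = 0" using q by simp
    obtain d r'' where rd: "r = d # r''" using lr k by (cases r) auto
    have "d \<noteq> b" using nf b rd by simp
    then have da: "d = a" by (cases d) auto
    define D where "D = concat (map (gm m) r'')"
    have D: "D \<in> subst_word (metal_subst m) r''" unfolding D_def by (rule sw_concat) (intro allI gm_mem)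
    have y: "replicate (k + 1) a @ [b] @ replicate (m - (k + 1)) a \<in> metal_subst m a"
      by (rule metal_mem) (use k in simp)
    have "m - (k + 1) = 1" using k by simp
    then have y': "replicate (k + 1) a @ [b] @ [a] \<in> metal_subst m a" using y by simp
    have x1: "(replicate (k + 1) a @ [b] @ [a]) @ D \<in> subst_word (metal_subst m) (a # r'')"
      by (rule sw_ConsI[OF y' D])
    have ab: "[a] \<in> metal_subst m b" by simp
    have x2: "[a] @ ((replicate (k + 1) a @ [b] @ [a]) @ D) \<in> subst_word (metal_subst m) (b # a # r'')"
      by (rule sw_ConsI[OF ab x1])
    have eq: "[a] @ ((replicate (k + 1) a @ [b] @ [a]) @ D) = (replicate m a @ [b]) @ (a # D)"
      using k by simp
    have x: "(replicate m a @ [b]) @ (a # D) \<in> subst_word (metal_subst m) (c # r)"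
      using x2 unfolding eq b rd da .
    have "take (m + 1) (drop q ((replicate m a @ [b]) @ (a # D))) = replicate m a @ [b] @ replicate (m - m) a"
      using q0 by simp
    then have P1: "take (m + 1) (drop q ((replicate m a @ [b]) @ (a # D))) \<in> {replicate i a @ [b] @ replicate (m - i) a | i. i \<le> m}"
      by (intro CollectI exI[of _ m] conjI) simp_all
    have P2: "q + (m + 1) \<le> length ((replicate m a @ [b]) @ (a # D))" using q0 by simp
    show ?thesis by (rule bexI[where x="(replicate m a @ [b]) @ (a # D)"], rule conjI[OF P1 P2], rule x)
  qed
qed

lemma metal_semi:
  assumes m: "m \<ge> 2"
  shows "semi_mixing_wrt (metal_subst m) {replicate i a @ [b] @ replicate (m - i) a | i. i \<le> m}"
proof (rule semi_generic[where g="gm m" and Q="nff b"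
      and l="\<lambda>c. if c = a then m + 1 else 1" and K=m and h="m + 1" and ll="m + 1" and tt="replicate (m + 1) a"])
  obtain k where k: "m = k + 2" using m by (metis add.commute le_add_diff_inverse)
  have a0: "replicate 0 a @ [b] @ replicate (m - 0) a \<in> metal_subst m a" by (rule metal_mem) simp
  have a1: "replicate 1 a @ [b] @ replicate (m - 1) a \<in> metal_subst m a" by (rule metal_mem) (use m in simp)
  show "\<forall>c. metal_subst m c \<noteq> {}"
  proof
    fix c show "metal_subst m c \<noteq> {}" using a0 by (cases c) auto
  qed
  show "\<forall>c x. x \<in> metal_subst m c \<longrightarrow> x \<noteq> []"
  proof (intro allI impI)
    fix c x assume "x \<in> metal_subst m c"
    then have "length x = (if c = a then m + 1 else 1)" by (rule metal_len)
    then show "x \<noteq> []" by (cases "c = a") auto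
  qed
  show "\<forall>c. \<exists>d y. y \<in> metal_subst m d \<and> c \<in> set y"
  proof
    fix c
    have "a \<in> set (replicate 1 a @ [b] @ replicate (m - 1) a)" "b \<in> set (replicate 1 a @ [b] @ replicate (m - 1) a)"
      by simp_all
    then show "\<exists>d y. y \<in> metal_subst m d \<and> c \<in> set y" using a1 by (cases c) blast+
  qed
  show "\<forall>c. \<exists>c1 c2. legal (metal_subst m) [c1, c, c2]"
  proof
    fix c show "\<exists>c1 c2. legal (metal_subst m) [c1, c, c2]"
    proof (cases c)
      case a
      have e: "replicate (m - 0) a = a # a # replicate k a" using k by (simp add: numeral_eq_Suc)
      have "sublist [b, a, a] (replicate 0 a @ [b] @ replicate (m - 0) a)" unfolding e by simp
      then have "legal (metal_subst m) [b, a, a]" by (rule legal_lvl1[where \<theta>="metal_subst m" and c=a, OF a0])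
      then show ?thesis using a by blast
    next
      case b
      have e: "replicate (m - 1) a = a # replicate k a" using k by (simp add: numeral_eq_Suc)
      have "sublist [a, b, a] (replicate 1 a @ [b] @ replicate (m - 1) a)" unfolding e by simp
      then have "legal (metal_subst m) [a, b, a]" by (rule legal_lvl1[where \<theta>="metal_subst m" and c=a, OF a1])
      then show ?thesis using b by blast
    qed
  qed
  show "\<forall>c. gm m c \<in> metal_subst m c" by (intro allI) (rule gm_mem)
  show "\<forall>e. nff b (concat (map (gm m) e))"
  proof (rule nff_concat, intro allI conjI)
    fix c
    show "gm m c \<noteq> []" by (simp add: gm_def)
    show "hd (gm m c) \<noteq> b" using m by (cases m) (auto simp: gm_def)
    show "nff b (gm m c)" by (auto simp: gm_def intro: nff_rep)
  qed
  show "\<forall>c x. x \<in> metal_subst m c \<longrightarrow> length x = (if c = a then m + 1 else 1)"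
    by (intro allI impI) (rule metal_len)
  show "\<forall>c r q. length r = m \<longrightarrow> nff b (c # r) \<longrightarrow> q < (if c = a then m + 1 else 1) \<longrightarrow>
          (\<exists>x\<in>subst_word (metal_subst m) (c # r).
              take (m + 1) (drop q x) \<in> {replicate i a @ [b] @ replicate (m - i) a | i. i \<le> m} \<and> q + (m + 1) \<le> length x)"
    using metal_C[OF m] .
  show "\<forall>c r. nff b (c # r) \<longrightarrow> nff b r" by (rule nff_tl)
  show "\<forall>u v. nff b (u @ v) \<longrightarrow> nff b u" by (rule nff_pre)
  show "\<forall>s\<in>{replicate i a @ [b] @ replicate (m - i) a | i. i \<le> m}. legal (metal_subst m) s \<and> length s = m + 1"
  proof
    fix s assume "s \<in> {replicate i a @ [b] @ replicate (m - i) a | i. i \<le> m}"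
    then have s: "s \<in> metal_subst m a" by simp
    show "legal (metal_subst m) s \<and> length s = m + 1"
      using legal_lvl1[where \<theta>="metal_subst m" and c=a, OF s, of s] metal_len[OF s] by simp
  qed
  show "legal (metal_subst m) (replicate (m + 1) a)"
  proof -
    have "sublist [b, a] (replicate 0 a @ [b] @ replicate (m - 0) a)"
      using m by (cases m) auto
    then have ba: "legal (metal_subst m) [b, a]" by (rule legal_lvl1[where \<theta>="metal_subst m" and c=a, OF a0])
    have ga: "replicate m a @ [b] \<in> metal_subst m a" using gm_mem[of m a] by (simp add: gm_def)
    have "[a] @ (replicate m a @ [b]) @ [] \<in> subst_word (metal_subst m) [b, a]"
      by (intro sw_ConsI) (use ga in simp_all)
    then have "legal (metal_subst m) ([a] @ (replicate m a @ [b]) @ [])"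
      by (rule legal_sw[OF _ ba, rotated]) (use a0 in \<open>intro allI, case_tac c, auto\<close>)
    moreover have "sublist (replicate (m + 1) a) ([a] @ (replicate m a @ [b]) @ [])" by simp
    ultimately show ?thesis by (rule legal_sub)
  qed
  show "length (replicate (m + 1) a) = m + 1" by simp
  show "replicate (m + 1) a \<notin> {replicate i a @ [b] @ replicate (m - i) a | i. i \<le> m}"
  proof
    assume "replicate (m + 1) a \<in> {replicate i a @ [b] @ replicate (m - i) a | i. i \<le> m}"
    then obtain i where "replicate (m + 1) a = replicate i a @ [b] @ replicate (m - i) a" by blast
    then have "b \<in> set (replicate (m + 1) a)" by simp
    then show False by simp
  qed
qed

theorem mainTheorem1:
  fixes m :: nat
  assumes "m \<ge> 2"
  shows "semi_mixing_wrt fib_subst {[a, b], [b, a]}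
       \<and> semi_mixing_wrt trib_subst {[A, B], [B, A], [A, C], [C, A]}
       \<and> semi_mixing_wrt (metal_subst m) {replicate i a @ [b] @ replicate (m - i) a | i. i \<le> m}"
  using fib_semi trib_semi metal_semi[OF assms] by blast

end
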